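(* Let $S$ be a pogroup and $B$ a poset. If $f:X\to B$ is a monotone map which is topological as a functor (posets regarded as categories), then $f$, regarded as an $S$-poset map with trivial action on both $X$ and $B$, is a regular injective object of $\mathbf{Pos}\text{-}S/B$.
   Context: A pogroup is a group with a partial order compatible with multiplication (a pomonoid that is a group). $\mathbf{Pos}\text{-}S$ is the category of right $S$-posets and action-preserving monotone maps; $\mathbf{Pos}\text{-}S/B$ its slice over $B$; trivial action means $as=a$ for all $a,s$. Regular injective means injective with respect to order-embeddings. A poset is a category with an arrow $a\to a'$ iff $a\le a'$. For a functor $G:\mathcal A\to\mathcal X$, a source $(f_i:A\to A_i)_{i\in I}$ is $G$-initial if for every source $(g_i:C\to A_i)$ and $\mathcal X$-morphism $h:GC\to GA$ with $Gg_i=Gf_i h$ for all $i$ there is a unique $\bar h:C\to A$ with $G\bar h=h$ and $g_i=f_i\bar h$; $G$ is topological if every $G$-structured source $(X\to GA_i)_{i\in I}$ has a unique $G$-initial lift (a source $(A\to A_i)$ with $GA=X$ mapped by $G$ to the given source). *)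

theory Defs
  imports "HOL-Algebra.Group"
begin

definition poset :: "'a set \<Rightarrow> ('a \<Rightarrow> 'a \<Rightarrow> bool) \<Rightarrow> bool" where
  "poset P r \<longleftrightarrow> (\<forall>x\<in>P. r x x)
     \<and> (\<forall>x\<in>P. \<forall>y\<in>P. r x y \<and> r y x \<longrightarrow> x = y)
     \<and> (\<forall>x\<in>P. \<forall>y\<in>P. \<forall>z\<in>P. r x y \<and> r y z \<longrightarrow> r x z)"

definition pogroup :: "('s, 'm) monoid_scheme \<Rightarrow> ('s \<Rightarrow> 's \<Rightarrow> bool) \<Rightarrow> bool" where
  "pogroup S r \<longleftrightarrow> group S \<and> poset (carrier S) r
     \<and> (\<forall>s\<in>carrier S. \<forall>t\<in>carrier S. \<forall>u\<in>carrier S.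
          r s t \<longrightarrow> r (s \<otimes>\<^bsub>S\<^esub> u) (t \<otimes>\<^bsub>S\<^esub> u) \<and> r (u \<otimes>\<^bsub>S\<^esub> s) (u \<otimes>\<^bsub>S\<^esub> t))"

definition monotone_map ::
  "'a set \<Rightarrow> ('a \<Rightarrow> 'a \<Rightarrow> bool) \<Rightarrow> 'b set \<Rightarrow> ('b \<Rightarrow> 'b \<Rightarrow> bool) \<Rightarrow> ('a \<Rightarrow> 'b) \<Rightarrow> bool" where
  "monotone_map A leA B leB f \<longleftrightarrow> (\<forall>x\<in>A. f x \<in> B) \<and> (\<forall>x\<in>A. \<forall>y\<in>A. leA x y \<longrightarrow> leB (f x) (f y))"

definition S_poset ::
  "('s, 'm) monoid_scheme \<Rightarrow> ('s \<Rightarrow> 's \<Rightarrow> bool) \<Rightarrow> 'a set \<Rightarrow> ('a \<Rightarrow> 'a \<Rightarrow> bool) \<Rightarrow> ('a \<Rightarrow> 's \<Rightarrow> 'a) \<Rightarrow> bool" where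
  "S_poset S leS A leA act \<longleftrightarrow> poset A leA
     \<and> (\<forall>a\<in>A. \<forall>s\<in>carrier S. act a s \<in> A)
     \<and> (\<forall>a\<in>A. act a \<one>\<^bsub>S\<^esub> = a)
     \<and> (\<forall>a\<in>A. \<forall>s\<in>carrier S. \<forall>t\<in>carrier S. act a (s \<otimes>\<^bsub>S\<^esub> t) = act (act a s) t)
     \<and> (\<forall>a\<in>A. \<forall>b\<in>A. \<forall>s\<in>carrier S. \<forall>t\<in>carrier S.
          leA a b \<and> leS s t \<longrightarrow> leA (act a s) (act b t))"

definition S_poset_map ::
  "('s, 'm) monoid_scheme \<Rightarrow> 'a set \<Rightarrow> ('a \<Rightarrow> 'a \<Rightarrow> bool) \<Rightarrow> ('a \<Rightarrow> 's \<Rightarrow> 'a)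
   \<Rightarrow> 'c set \<Rightarrow> ('c \<Rightarrow> 'c \<Rightarrow> bool) \<Rightarrow> ('c \<Rightarrow> 's \<Rightarrow> 'c) \<Rightarrow> ('a \<Rightarrow> 'c) \<Rightarrow> bool" where
  "S_poset_map S A leA actA C leC actC h \<longleftrightarrow> monotone_map A leA C leC h
     \<and> (\<forall>a\<in>A. \<forall>s\<in>carrier S. h (actA a s) = actC (h a) s)"

definition order_embedding ::
  "'a set \<Rightarrow> ('a \<Rightarrow> 'a \<Rightarrow> bool) \<Rightarrow> 'c set \<Rightarrow> ('c \<Rightarrow> 'c \<Rightarrow> bool) \<Rightarrow> ('a \<Rightarrow> 'c) \<Rightarrow> bool" where
  "order_embedding A leA C leC h \<longleftrightarrow> (\<forall>a\<in>A. h a \<in> C)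
     \<and> (\<forall>a\<in>A. \<forall>b\<in>A. leC (h a) (h b) \<longleftrightarrow> leA a b)"

definition trivial_action :: "'a \<Rightarrow> 's \<Rightarrow> 'a" where
  "trivial_action a s = a"

text \<open>Posets as categories: an arrow a \<rightarrow> a' exists (uniquely) iff a <= a'.
  For the functor f : X \<rightarrow> B, a source (a \<rightarrow> Ai i) (i \<in> I) is f-initial iff for every
  source (c \<rightarrow> Ai i) and every arrow f c \<rightarrow> f a there is a (necessarily unique) arrow
  c \<rightarrow> a; the compatibility equations hold automatically in a poset.\<close>
definition initial_source ::
  "'x set \<Rightarrow> ('x \<Rightarrow> 'x \<Rightarrow> bool) \<Rightarrow> ('b \<Rightarrow> 'b \<Rightarrow> bool) \<Rightarrow> ('x \<Rightarrow> 'b)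
   \<Rightarrow> 'i set \<Rightarrow> ('i \<Rightarrow> 'x) \<Rightarrow> 'x \<Rightarrow> bool" where
  "initial_source X leX leB f I Ai a \<longleftrightarrow>
     (\<forall>c\<in>X. (\<forall>i\<in>I. leX c (Ai i)) \<and> leB (f c) (f a) \<longrightarrow> leX c a)"

text \<open>Sources are indexed by subsets of X
  (in a poset a source is determined by its set of codomains).\<close>
definition topological_functor ::
  "'x set \<Rightarrow> ('x \<Rightarrow> 'x \<Rightarrow> bool) \<Rightarrow> 'b set \<Rightarrow> ('b \<Rightarrow> 'b \<Rightarrow> bool) \<Rightarrow> ('x \<Rightarrow> 'b) \<Rightarrow> bool" where
  "topological_functor X leX B leB f \<longleftrightarrow> monotone_map X leX B leB f
     \<and> (\<forall>(I :: 'x set) (Ai :: 'x \<Rightarrow> 'x) x.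
          x \<in> B \<and> Ai ` I \<subseteq> X \<and> (\<forall>i\<in>I. leB x (f (Ai i))) \<longrightarrow>
          (\<exists>!a. a \<in> X \<and> f a = x \<and> (\<forall>i\<in>I. leX a (Ai i))
                 \<and> initial_source X leX leB f I Ai a))"

end

theory Submission
  imports Defs
begin

lemma main_part:
  fixes S :: "('s, 'm) monoid_scheme" and leS :: "'s \<Rightarrow> 's \<Rightarrow> bool"
    and X :: "'x set" and leX :: "'x \<Rightarrow> 'x \<Rightarrow> bool"
    and B :: "'b set" and leB :: "'b \<Rightarrow> 'b \<Rightarrow> bool"
    and f :: "'x \<Rightarrow> 'b"
    and A :: "'a set" and C :: "'c set"
  assumes pg: "pogroup S leS"
    and pX: "poset X leX" and pB: "poset B leB"
    and top: "topological_functor X leX B leB f"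
    and SA: "S_poset S leS A leA actA" and SC: "S_poset S leS C leC actC"
    and mg: "S_poset_map S A leA actA B leB trivial_action g"
    and mk: "S_poset_map S C leC actC B leB trivial_action k"
    and mh: "S_poset_map S A leA actA C leC actC h" and kh: "\<forall>a\<in>A. k (h a) = g a"
    and emb: "order_embedding A leA C leC h"
    and mu: "S_poset_map S A leA actA X leX trivial_action u" and fu: "\<forall>a\<in>A. f (u a) = g a"
  shows "\<exists>v. S_poset_map S C leC actC X leX trivial_action v
                 \<and> (\<forall>c\<in>C. f (v c) = k c) \<and> (\<forall>a\<in>A. v (h a) = u a)"
proof -
  define I where "I c = {x. \<exists>a\<in>A. leC c (h a) \<and> x = u a}" for c
  define P where "P c a \<longleftrightarrow> a \<in> X \<and> f a = k c \<and> (\<forall>i\<in>I c. leX a (id i))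
                 \<and> initial_source X leX leB f (I c) id a" for c a
  define v where "v c = (SOME a. P c a)" for c
  have Cpos: "poset C leC" and Ccl: "\<forall>a\<in>C. \<forall>s\<in>carrier S. actC a s \<in> C"
    and C1: "\<forall>a\<in>C. actC a \<one>\<^bsub>S\<^esub> = a"
    and Cass: "\<forall>a\<in>C. \<forall>s\<in>carrier S. \<forall>t\<in>carrier S. actC a (s \<otimes>\<^bsub>S\<^esub> t) = actC (actC a s) t"
    and Cmon: "\<forall>a\<in>C. \<forall>b\<in>C. \<forall>s\<in>carrier S. \<forall>t\<in>carrier S. leC a b \<and> leS s t \<longrightarrow> leC (actC a s) (actC b t)"
    using SC unfolding S_poset_def by blast+
  have transC: "\<forall>x\<in>C. \<forall>y\<in>C. \<forall>z\<in>C. leC x y \<and> leC y z \<longrightarrow> leC x z"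
    using Cpos unfolding poset_def by blast
  have Acl: "\<forall>a\<in>A. \<forall>s\<in>carrier S. actA a s \<in> A" and Apos: "poset A leA"
    using SA unfolding S_poset_def by blast+
  have reflA: "\<forall>a\<in>A. leA a a" using Apos unfolding poset_def by blast
  have hact: "\<forall>a\<in>A. \<forall>s\<in>carrier S. h (actA a s) = actC (h a) s"
    using mh unfolding S_poset_map_def by blast
  have uact: "\<forall>a\<in>A. \<forall>s\<in>carrier S. u (actA a s) = u a"
    using mu unfolding S_poset_map_def trivial_action_def by blast
  have grp: "group S" and refS: "\<forall>s\<in>carrier S. leS s s"
    using pg unfolding pogroup_def poset_def by auto
  have uX: "\<forall>a\<in>A. u a \<in> X" using mu unfolding S_poset_map_def monotone_map_def by auto
  have kB: "\<forall>c\<in>C. k c \<in> B" using mk unfolding S_poset_map_def monotone_map_def by auto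
  have hC: "\<forall>a\<in>A. h a \<in> C" using mh unfolding S_poset_map_def monotone_map_def by auto
  have kmono: "\<forall>x\<in>C. \<forall>y\<in>C. leC x y \<longrightarrow> leB (k x) (k y)"
    using mk unfolding S_poset_map_def monotone_map_def by auto
  have umono: "\<forall>x\<in>A. \<forall>y\<in>A. leA x y \<longrightarrow> leX (u x) (u y)"
    using mu unfolding S_poset_map_def monotone_map_def by auto
  have ex1: "\<exists>!a. P c a" if c: "c \<in> C" for c
  proof -
    have "k c \<in> B \<and> id ` I c \<subseteq> X \<and> (\<forall>i\<in>I c. leB (k c) (f (id i)))"
    proof (intro conjI)
      show "k c \<in> B" using kB c by auto
      show "id ` I c \<subseteq> X" using uX unfolding I_def by auto
      show "\<forall>i\<in>I c. leB (k c) (f (id i))"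
      proof
        fix i assume "i \<in> I c"
        then obtain a where a: "a \<in> A" "leC c (h a)" "i = u a" unfolding I_def by blast
        have "leB (k c) (k (h a))" using kmono c hC a by blast
        then show "leB (k c) (f (id i))" using a fu kh by simp
      qed
    qed
    then have "\<exists>!a. a \<in> X \<and> f a = k c \<and> (\<forall>i\<in>I c. leX a (id i)) \<and> initial_source X leX leB f (I c) id a"
      by (rule top[unfolded topological_functor_def, THEN conjunct2, THEN spec, THEN spec, THEN spec, THEN mp])
    then show ?thesis unfolding P_def .
  qed
  have Pv: "P c (v c)" if "c \<in> C" for c
    unfolding v_def by (rule someI_ex[OF ex1_implies_ex[OF ex1[OF that]]])
  have vX: "v c \<in> X" and fv: "f (v c) = k c" and vle: "\<forall>i\<in>I c. leX (v c) i"
     and vin: "initial_source X leX leB f (I c) id (v c)" if "c \<in> C" for c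
    using Pv[OF that] unfolding P_def by auto
  have Itriv: "I (actC c s) = I c" if c: "c \<in> C" and s: "s \<in> carrier S" for c s
  proof
    show "I c \<subseteq> I (actC c s)"
    proof
      fix x assume "x \<in> I c"
      then obtain a where a: "a \<in> A" "leC c (h a)" "x = u a" unfolding I_def by auto
      have "leC (actC c s) (actC (h a) s)"
        using Cmon c a hC s refS by blast
      moreover have "actC (h a) s = h (actA a s)" using hact a s by simp
      moreover have "u (actA a s) = u a" using uact a s by simp
      moreover have "actA a s \<in> A" using Acl a s by blast
      ultimately show "x \<in> I (actC c s)" unfolding I_def using a by auto
    qed
  next
    show "I (actC c s) \<subseteq> I c"
    proof
      fix x assume "x \<in> I (actC c s)"
      then obtain a where a: "a \<in> A" "leC (actC c s) (h a)" "x = u a" unfolding I_def by auto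
      have si: "inv\<^bsub>S\<^esub> s \<in> carrier S" using grp s by (simp add: group.inv_closed)
      have cs: "actC c s \<in> C" using Ccl c s by blast
      have "leC (actC (actC c s) (inv\<^bsub>S\<^esub> s)) (actC (h a) (inv\<^bsub>S\<^esub> s))"
        using Cmon cs a hC si refS by blast
      moreover have "actC (actC c s) (inv\<^bsub>S\<^esub> s) = c"
      proof -
        have "actC (actC c s) (inv\<^bsub>S\<^esub> s) = actC c (s \<otimes>\<^bsub>S\<^esub> inv\<^bsub>S\<^esub> s)"
          using Cass c s si by simp
        also have "\<dots> = actC c \<one>\<^bsub>S\<^esub>" using grp s by (simp add: group.r_inv)
        also have "\<dots> = c" using C1 c by blast
        finally show ?thesis .
      qed
      moreover have "actC (h a) (inv\<^bsub>S\<^esub> s) = h (actA a (inv\<^bsub>S\<^esub> s))"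
        using hact a si by simp
      moreover have "u (actA a (inv\<^bsub>S\<^esub> s)) = u a"
        using uact a si by simp
      moreover have "actA a (inv\<^bsub>S\<^esub> s) \<in> A" using Acl a si by blast
      ultimately show "x \<in> I c" unfolding I_def using a by auto
    qed
  qed
  have ktriv: "k (actC c s) = k c" if "c \<in> C" "s \<in> carrier S" for c s
    using mk that unfolding S_poset_map_def trivial_action_def by auto
  have vtriv: "v (actC c s) = v c" if "c \<in> C" "s \<in> carrier S" for c s
    unfolding v_def P_def using Itriv[OF that] ktriv[OF that] by simp
  have vmono: "leX (v c) (v c')" if c: "c \<in> C" and c': "c' \<in> C" and le: "leC c c'" for c c'
  proof -
    have "I c' \<subseteq> I c" unfolding I_def
    proof clarify
      fix a assume a: "a \<in> A" "leC c' (h a)"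
      have "leC c (h a)" using transC c c' a hC le by blast
      then show "\<exists>a'\<in>A. leC c (h a') \<and> u a = u a'" using a by auto
    qed
    then have "\<forall>i\<in>I c'. leX (v c) (id i)" using vle[OF c] by auto
    moreover have "leB (f (v c)) (f (v c'))" using fv c c' kmono le by auto
    ultimately show ?thesis using vin[OF c'] vX[OF c] unfolding initial_source_def by blast
  qed
  have vh: "v (h a) = u a" if a: "a \<in> A" for a
  proof -
    have ha: "h a \<in> C" using hC a by auto
    have ord: "\<forall>x\<in>A. \<forall>y\<in>A. leC (h x) (h y) \<longleftrightarrow> leA x y" using emb unfolding order_embedding_def by auto
    have refA: "leA a a" using reflA a by blast
    have "P (h a) (u a)" unfolding P_def
    proof (intro conjI)
      show "u a \<in> X" using uX a by auto
      show "f (u a) = k (h a)" using fu kh a by auto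
      show "\<forall>i\<in>I (h a). leX (u a) (id i)" unfolding I_def using ord umono a by auto
      show "initial_source X leX leB f (I (h a)) id (u a)" unfolding initial_source_def I_def
        using a refA ord by fastforce
    qed
    then show ?thesis using ex1[OF ha] Pv[OF ha] by blast
  qed
  have "S_poset_map S C leC actC X leX trivial_action v"
    unfolding S_poset_map_def monotone_map_def trivial_action_def
    using vX vmono vtriv by auto
  then show ?thesis using fv vh by blast
qed

theorem mainTheorem9:
  fixes S :: "('s, 'm) monoid_scheme" and leS :: "'s \<Rightarrow> 's \<Rightarrow> bool"
    and X :: "'x set" and leX :: "'x \<Rightarrow> 'x \<Rightarrow> bool"
    and B :: "'b set" and leB :: "'b \<Rightarrow> 'b \<Rightarrow> bool"
    and f :: "'x \<Rightarrow> 'b"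
  assumes "pogroup S leS"
    and "poset X leX" and "poset B leB"
    and "topological_functor X leX B leB f"
  shows "S_poset S leS X leX trivial_action \<and> S_poset S leS B leB trivial_action
    \<and> S_poset_map S X leX trivial_action B leB trivial_action f
    \<and> (\<forall>(A :: 'a set) leA actA (C :: 'c set) leC actC g k h u.
         S_poset S leS A leA actA \<and> S_poset S leS C leC actC
         \<and> S_poset_map S A leA actA B leB trivial_action g
         \<and> S_poset_map S C leC actC B leB trivial_action k
         \<and> S_poset_map S A leA actA C leC actC h \<and> (\<forall>a\<in>A. k (h a) = g a)
         \<and> order_embedding A leA C leC h
         \<and> S_poset_map S A leA actA X leX trivial_action u \<and> (\<forall>a\<in>A. f (u a) = g a)
         \<longrightarrow> (\<exists>v. S_poset_map S C leC actC X leX trivial_action v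
                 \<and> (\<forall>c\<in>C. f (v c) = k c) \<and> (\<forall>a\<in>A. v (h a) = u a)))"
proof (intro conjI allI impI)
  show "S_poset S leS X leX trivial_action"
    using assms(2) unfolding S_poset_def trivial_action_def by simp
  show "S_poset S leS B leB trivial_action"
    using assms(3) unfolding S_poset_def trivial_action_def by simp
  show "S_poset_map S X leX trivial_action B leB trivial_action f"
    using assms(4) unfolding S_poset_map_def trivial_action_def topological_functor_def by simp
next
  fix A :: "'a set" and leA actA and C :: "'c set" and leC actC g k h u
  assume H: "S_poset S leS A leA actA \<and> S_poset S leS C leC actC
         \<and> S_poset_map S A leA actA B leB trivial_action g
         \<and> S_poset_map S C leC actC B leB trivial_action k
         \<and> S_poset_map S A leA actA C leC actC h \<and> (\<forall>a\<in>A. k (h a) = g a)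
         \<and> order_embedding A leA C leC h
         \<and> S_poset_map S A leA actA X leX trivial_action u \<and> (\<forall>a\<in>A. f (u a) = g a)"
  show "\<exists>v. S_poset_map S C leC actC X leX trivial_action v
                 \<and> (\<forall>c\<in>C. f (v c) = k c) \<and> (\<forall>a\<in>A. v (h a) = u a)"
    using H by (elim conjE) (rule main_part[OF assms])
qed

end
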